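(* Suppose $\mathbf A$ is irreducible. Then for all $s\ge0$, $\phi^s$ is quasimultiplicative on $\mathbf S$.
   Context: $\mathbf A=\{A_i\}_{i\in\mathcal I}\subset\mathrm{SL}(3,\mathbb R)$ with $\mathcal I$ finite or countable, generating the semigroup $\mathbf S$; $A_u=A_{i_1}\cdots A_{i_m}$ for a finite word $u$, $\mathcal I^*$ the set of finite words. $\mathbf A$ is irreducible if no proper nonzero linear subspace of $\mathbb R^3$ is invariant under every $A_i$. For singular values $\alpha_1\ge\alpha_2\ge\alpha_3$ of $A$ and $s\ge0$: $\phi^s(A)=(\alpha_2/\alpha_1)^s$ if $0\le s\le1$; $\frac{\alpha_2}{\alpha_1}(\frac{\alpha_3}{\alpha_1})^{s-1}$ if $1\le s\le2$; $(\frac{\alpha_2\alpha_3}{\alpha_1^2})^s$ if $s\ge2$. A function $\phi:\mathbf S\to\mathbb R_{>0}$ is quasimultiplicative on $\mathbf S$ if there exist a finite $\Gamma\subset\mathcal I^*$ and $c>0$ such that for all $u,w\in\mathcal I^*$ there is $k\in\Gamma$ with $\phi(A_{ukw})\ge c\,\phi(A_u)\phi(A_w)$. *)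

theory Defs
  imports "HOL-Analysis.Analysis"
begin

definition diag3 :: "real \<Rightarrow> real \<Rightarrow> real \<Rightarrow> real^3^3" where
  "diag3 a b c = (\<chi> i j. if i = j then (if i = 0 then a else if i = 1 then b else c) else 0)"

definition sing_vals :: "real^3^3 \<Rightarrow> real \<times> real \<times> real" where
  "sing_vals M = (THE (a1, a2, a3). a1 \<ge> a2 \<and> a2 \<ge> a3 \<and> a3 \<ge> 0 \<and>
      (\<exists>U V. orthogonal_matrix U \<and> orthogonal_matrix V \<and> M = U ** diag3 a1 a2 a3 ** V))"

definition alpha1 :: "real^3^3 \<Rightarrow> real" where "alpha1 M = fst (sing_vals M)"
definition alpha2 :: "real^3^3 \<Rightarrow> real" where "alpha2 M = fst (snd (sing_vals M))"
definition alpha3 :: "real^3^3 \<Rightarrow> real" where "alpha3 M = snd (snd (sing_vals M))"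

definition phi :: "real \<Rightarrow> real^3^3 \<Rightarrow> real" where
  "phi s M =
     (if s \<le> 1 then (alpha2 M / alpha1 M) powr s
      else if s \<le> 2 then (alpha2 M / alpha1 M) * (alpha3 M / alpha1 M) powr (s - 1)
      else (alpha2 M * alpha3 M / (alpha1 M)^2) powr s)"

definition word_mat :: "('i \<Rightarrow> real^3^3) \<Rightarrow> 'i list \<Rightarrow> real^3^3" where
  "word_mat A u = foldr (\<lambda>i M. A i ** M) u (mat 1)"

definition irreducible_family :: "('i \<Rightarrow> real^3^3) \<Rightarrow> bool" where
  "irreducible_family A \<longleftrightarrow>
     \<not> (\<exists>V. subspace V \<and> V \<noteq> {0} \<and> V \<noteq> UNIV \<and> (\<forall>i. \<forall>v\<in>V. A i *v v \<in> V))"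

definition quasimultiplicative :: "('i \<Rightarrow> real^3^3) \<Rightarrow> (real^3^3 \<Rightarrow> real) \<Rightarrow> bool" where
  "quasimultiplicative A f \<longleftrightarrow>
     (\<exists>\<Gamma> c. finite \<Gamma> \<and> c > 0 \<and>
        (\<forall>u w. \<exists>k\<in>\<Gamma>. f (word_mat A (u @ k @ w)) \<ge> c * f (word_mat A u) * f (word_mat A w)))"

end

theory Submission
  imports Defs
begin

lemma three_facts: "(3::3) = 0" "(1::3) \<noteq> 0" "(2::3) \<noteq> 0" "(2::3) \<noteq> 1" "(1::3) \<noteq> 2"
  "(0::3) \<noteq> 1" "(0::3) \<noteq> 2" 
  by simp_all

lemma diag3_mult: "diag3 a b c *v y = (\<chi> i. (if i = 0 then a else if i = 1 then b else c) * y $ i)"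
proof -
  have "(diag3 a b c *v y) $ i = (if i = 0 then a else if i = 1 then b else c) * y $ i" for i
  proof -
    have dl: "(\<Sum>j\<in>(UNIV::3 set). if i = j then f j else 0) = f i" for f :: "3 \<Rightarrow> real" by simp
    have "(diag3 a b c *v y) $ i = (\<Sum>j\<in>UNIV. (if i = j then (if i = 0 then a else if i = 1 then b else c) * y $ j else 0))"
      unfolding diag3_def matrix_vector_mult_def vec_lambda_beta by (intro sum.cong) auto
    also have "\<dots> = (if i = 0 then a else if i = 1 then b else c) * y $ i"
      using dl[of "\<lambda>j. (if i = 0 then a else if i = 1 then b else c) * y $ j"] by simp
    finally show ?thesis .
  qed
  thus ?thesis by (simp add: vec_eq_iff)
qed

lemma norm_sq3: "(norm (y::real^3))^2 = (y$0)^2 + (y$1)^2 + (y$2)^2"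
  unfolding power2_norm_eq_inner inner_vec_def sum_3 by (simp add: power2_eq_square three_facts)

lemma orth_norm: "orthogonal_matrix U \<Longrightarrow> norm (U *v x) = norm (x::real^'n)"
  by (metis orthogonal_transformation_matrix orthogonal_transformation_norm matrix_of_matrix_vector_mul matrix_vector_mul_linear)

lemma det_diag3: "det (diag3 a b c) = a * b * c"
proof -
  have "det (diag3 a b c) = prod (\<lambda>i. diag3 a b c $ i $ i) UNIV"
    by (rule det_diagonal) (simp add: diag3_def)
  also have "\<dots> = a * b * c" unfolding UNIV_3 by (simp add: diag3_def three_facts)
  finally show ?thesis .
qed

lemma diag_upper: assumes "a \<ge> b" "b \<ge> c" "c \<ge> 0"
  shows "norm (diag3 a b c *v y) \<le> a * norm y"
proof -
  have "(norm (diag3 a b c *v y))^2 = a^2 * (y$0)^2 + b^2 * (y$1)^2 + c^2*(y$2)^2"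
    unfolding norm_sq3 diag3_mult by (simp add: three_facts power_mult_distrib)
  also have "\<dots> \<le> a^2 * (y$0)^2 + a^2 * (y$1)^2 + a^2*(y$2)^2"
    using assms by (intro add_mono mult_right_mono power_mono) auto
  also have "\<dots> = (a * norm y)^2" unfolding power_mult_distrib norm_sq3 by (simp add: algebra_simps)
  finally show ?thesis using assms by (meson order.trans power2_le_imp_le mult_nonneg_nonneg norm_ge_zero)
qed

lemma diag_lower: assumes "a \<ge> b" "b \<ge> c" "c \<ge> 0"
  shows "c * norm y \<le> norm (diag3 a b c *v y)"
proof -
  have "(c * norm y)^2 = c^2 * (y$0)^2 + c^2 * (y$1)^2 + c^2*(y$2)^2"
    unfolding power_mult_distrib norm_sq3 by (simp add: algebra_simps)
  also have "\<dots> \<le> a^2 * (y$0)^2 + b^2 * (y$1)^2 + c^2*(y$2)^2"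
    using assms by (intro add_mono mult_right_mono power_mono) auto
  also have "\<dots> = (norm (diag3 a b c *v y))^2"
    unfolding norm_sq3 diag3_mult by (simp add: three_facts power_mult_distrib)
  finally show ?thesis by (meson power2_le_imp_le norm_ge_zero)
qed

lemma diag_e0: "norm (diag3 a b c *v axis 0 1) = \<bar>a\<bar>"
proof -
  have "(norm (diag3 a b c *v axis 0 1))^2 = a^2"
    unfolding norm_sq3 diag3_mult by (simp add: three_facts axis_def)
  thus ?thesis by (metis norm_ge_zero real_sqrt_abs real_sqrt_unique)
qed

lemma diag_e2: "norm (diag3 a b c *v axis 2 1) = \<bar>c\<bar>"
proof -
  have "(norm (diag3 a b c *v axis 2 1))^2 = c^2"
    unfolding norm_sq3 diag3_mult by (simp add: three_facts axis_def)
  thus ?thesis by (metis norm_ge_zero real_sqrt_abs real_sqrt_unique)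
qed

lemma svd_props:
  assumes U: "orthogonal_matrix U" and V: "orthogonal_matrix V" and o: "a1 \<ge> a2" "a2 \<ge> a3" "a3 \<ge> 0"
    and M: "M = U ** diag3 a1 a2 a3 ** V"
  shows "norm (M *v x) \<le> a1 * norm x" "a3 * norm x \<le> norm (M *v x)"
    "\<exists>x. norm x = 1 \<and> norm (M *v x) = a1" "\<exists>x. norm x = 1 \<and> norm (M *v x) = a3"
    "\<bar>det M\<bar> = a1 * a2 * a3"
proof -
  have Mx: "norm (M *v x) = norm (diag3 a1 a2 a3 *v (V *v x))" for x
    using U by (simp add: M orth_norm flip: matrix_vector_mul_assoc)
  have Vx: "norm (V *v x) = norm x" for x using V orth_norm by blast
  show "norm (M *v x) \<le> a1 * norm x" using Mx Vx diag_upper[OF o] by metis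
  show "a3 * norm x \<le> norm (M *v x)" using Mx Vx diag_lower[OF o] by metis
  have VT: "V *v (transpose V *v e) = e" for e
    using V by (metis matrix_vector_mul_assoc orthogonal_matrix_def matrix_vector_mul_lid)
  have nT: "norm (transpose V *v axis k 1) = 1" for k
    using V orth_norm[of "transpose V"] by (simp add: norm_axis_1)
  show "\<exists>x. norm x = 1 \<and> norm (M *v x) = a1"
    using nT[of 0] Mx[of "transpose V *v axis 0 1"] VT diag_e0 o by (metis abs_of_nonneg order.trans)
  show "\<exists>x. norm x = 1 \<and> norm (M *v x) = a3"
    using nT[of 2] Mx[of "transpose V *v axis 2 1"] VT diag_e2 o by (metis abs_of_nonneg)
  have "det M = det U * (a1 * a2 * a3) * det V"
    by (simp add: M det_mul det_diag3)
  moreover have "\<bar>det U\<bar> = 1" "\<bar>det V\<bar> = 1" using det_orthogonal_matrix U V by fastforce+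
  ultimately show "\<bar>det M\<bar> = a1 * a2 * a3" using o by (simp add: abs_mult)
qed

lemma svd_unique:
  assumes "det M \<noteq> 0"
    and "orthogonal_matrix U" "orthogonal_matrix V" "a1 \<ge> a2" "a2 \<ge> a3" "a3 \<ge> 0"
    and "M = U ** diag3 a1 a2 a3 ** V"
    and "orthogonal_matrix U'" "orthogonal_matrix V'" "b1 \<ge> b2" "b2 \<ge> b3" "b3 \<ge> 0"
    and "M = U' ** diag3 b1 b2 b3 ** V'"
  shows "a1 = b1 \<and> a2 = b2 \<and> a3 = b3"
proof -
  note A = svd_props[OF assms(2-7)] and B = svd_props[OF assms(8-13)]
  have 1: "a1 = b1"
  proof (rule antisym)
    obtain x where "norm x = 1" "norm (M *v x) = a1" using A(3) by blast
    thus "a1 \<le> b1" using B(1)[of x] by simp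
    obtain y where "norm y = 1" "norm (M *v y) = b1" using B(3) by blast
    thus "b1 \<le> a1" using A(1)[of y] by simp
  qed
  have 3: "a3 = b3"
  proof (rule antisym)
    obtain x where "norm x = 1" "norm (M *v x) = a3" using A(4) by blast
    thus "b3 \<le> a3" using B(2)[of x] by simp
    obtain y where "norm y = 1" "norm (M *v y) = b3" using B(4) by blast
    thus "a3 \<le> b3" using A(2)[of y] by simp
  qed
  have "a1 * a2 * a3 = b1 * b2 * b3" using A(5) B(5) by (rule subst)
  moreover have "a1 * a3 \<noteq> 0"
  proof
    assume "a1 * a3 = 0"
    hence "a1 * a2 * a3 = 0" by auto
    thus False using A(5) assms(1) by (metis abs_0_eq)
  qed
  ultimately have "a2 = b2" using 1 3
  proof -
    have "(a1 * a3) * a2 = (a1 * a3) * b2" using \<open>a1 * a2 * a3 = b1 * b2 * b3\<close> 1 3 by (simp add: ac_simps)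
    thus ?thesis using \<open>a1 * a3 \<noteq> 0\<close> by simp
  qed
  with 1 3 show ?thesis by simp
qed

lemma quad_zero:
  fixes b k :: real
  assumes "\<And>t. 2*t*b + t^2*k \<le> 0"
  shows "b = 0"
proof (rule ccontr)
  assume b: "b \<noteq> 0"
  define K where "K = \<bar>k\<bar> + 1"
  have K: "K > 0" "\<bar>k\<bar> \<le> K" unfolding K_def by auto
  define t where "t = b / K"
  have "t^2 * (-K) \<le> t^2 * k" using K by (intro mult_left_mono) auto
  moreover have "t^2 * K = b^2 / K" using K by (simp add: t_def power2_eq_square field_simps)
  moreover have "2*t*b = 2 * (b^2/K)"
    using K by (simp add: t_def power2_eq_square field_simps)
  moreover have "b^2 / K > 0" using b K by simp
  ultimately show False using assms[of t] by simp
qed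

lemma var_orth:
  fixes M :: "real^3^3" and p v w :: "real^3"
  assumes vp: "v \<bullet> p = 0" and v1: "norm v = 1"
    and max: "\<And>x. x \<bullet> p = 0 \<Longrightarrow> norm x = 1 \<Longrightarrow> norm (M *v x) \<le> norm (M *v v)"
    and wp: "w \<bullet> p = 0" and wv: "w \<bullet> v = 0"
  shows "(M *v w) \<bullet> (M *v v) = 0"
proof -
  define a where "a = norm (M *v v)"
  have hom: "norm (M *v x) \<le> a * norm x" if "x \<bullet> p = 0" for x
  proof (cases "x = 0")
    case True then show ?thesis by simp
  next
    case False
    have "norm (M *v ((1/norm x) *\<^sub>R x)) \<le> a"
      using max[of "(1/norm x) *\<^sub>R x"] that False unfolding a_def by (simp add: inner_scaleR_left)
    then show ?thesis using False by (simp add: matrix_vector_mult_scaleR field_simps)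
  qed
  define b where "b = (M *v w) \<bullet> (M *v v)"
  define k where "k = (norm (M *v w))^2 - a^2 * (norm w)^2"
  have "2*t*b + t^2*k \<le> 0" for t
  proof -
    have "(v + t *\<^sub>R w) \<bullet> p = 0" using vp wp by (simp add: inner_add_left)
    hence "(norm (M *v (v + t *\<^sub>R w)))^2 \<le> (a * norm (v + t *\<^sub>R w))^2"
      using hom by (meson norm_ge_zero power_mono)
    moreover have "(norm (M *v (v + t *\<^sub>R w)))^2 = a^2 + 2*t*b + t^2 * (norm (M *v w))^2"
      unfolding a_def b_def power2_norm_eq_inner
      by (simp add: matrix_vector_right_distrib matrix_vector_mult_scaleR inner_add_left inner_add_right
          inner_commute power2_eq_square algebra_simps)
    moreover have "(a * norm (v + t *\<^sub>R w))^2 = a^2 * (1 + t^2 * (norm w)^2)"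
      using v1 wv norm_eq_1[of v] unfolding power_mult_distrib power2_norm_eq_inner
      by (simp add: inner_add_left inner_add_right inner_commute power2_eq_square algebra_simps)
    ultimately show ?thesis unfolding k_def by (simp add: algebra_simps)
  qed
  then show ?thesis using quad_zero b_def by blast
qed

lemma three_cases: "(i::3) = 0 \<or> i = 1 \<or> i = 2"
  using exhaust_3[of i] by auto

lemma diag3_fun: "diag3 (d 0) (d 1) (d 2) *v y = (\<chi> i. d i * y $ i)"
proof -
  have "(if i = 0 then d 0 else if i = 1 then d 1 else d 2) = d i" for i :: 3
    using three_cases[of i] by auto
  thus ?thesis unfolding diag3_mult by simp
qed

lemma svd_assemble:
  fixes M :: "real^3^3" and vv :: "3 \<Rightarrow> real^3" and d :: "3 \<Rightarrow> real"
  assumes n1: "\<And>i. norm (vv i) = 1" and orth: "\<And>i j. i \<noteq> j \<Longrightarrow> vv i \<bullet> vv j = 0"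
    and morth: "\<And>i j. i \<noteq> j \<Longrightarrow> (M *v vv i) \<bullet> (M *v vv j) = 0"
    and d: "\<And>i. d i = norm (M *v vv i)" and dpos: "\<And>i. d i > 0"
  shows "orthogonal_matrix (\<chi> i. vv i)"
    "orthogonal_matrix (\<chi> i j. (M *v vv j) $ i / d j)"
    "M = (\<chi> i j. (M *v vv j) $ i / d j) ** diag3 (d 0) (d 1) (d 2) ** (\<chi> i. vv i)"
proof -
  define V where "V = (\<chi> i. vv i)"
  define U where "U = (\<chi> i j. (M *v vv j) $ i / d j)"
  have rowV: "row i V = vv i" for i unfolding V_def row_def by (simp add: vec_eq_iff)
  have colU: "column j U = (1 / d j) *\<^sub>R (M *v vv j)" for j
    unfolding U_def column_def by (simp add: vec_eq_iff)
  show oV: "orthogonal_matrix (\<chi> i. vv i)"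
    unfolding orthogonal_matrix_orthonormal_rows V_def[symmetric] rowV
    using n1 orth by (simp add: orthogonal_def)
  show "orthogonal_matrix (\<chi> i j. (M *v vv j) $ i / d j)"
    unfolding orthogonal_matrix_orthonormal_columns U_def[symmetric] colU
    using d dpos morth by (simp add: orthogonal_def)
  have Vx: "V *v x = (\<chi> i. vv i \<bullet> x)" for x
    unfolding V_def by (simp add: matrix_vector_mult_def inner_vec_def vec_eq_iff)
  have expand: "x = (\<Sum>j\<in>UNIV. (vv j \<bullet> x) *\<^sub>R vv j)" for x
  proof -
    have "x = (transpose V ** V) *v x" using oV unfolding V_def[symmetric] orthogonal_matrix_def by simp
    also have "\<dots> = transpose V *v (V *v x)" by (simp add: matrix_vector_mul_assoc)
    also have "\<dots> = (\<Sum>j\<in>UNIV. (vv j \<bullet> x) *\<^sub>R vv j)"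
      unfolding Vx matrix_mult_sum[of "transpose V"] column_transpose rowV by (simp add: scalar_mult_eq_scaleR)
    finally show ?thesis .
  qed
  have "M *v x = (U ** diag3 (d 0) (d 1) (d 2) ** V) *v x" for x
  proof -
    have "(U ** diag3 (d 0) (d 1) (d 2) ** V) *v x = U *v (diag3 (d 0) (d 1) (d 2) *v (V *v x))"
      by (simp add: matrix_vector_mul_assoc matrix_mul_assoc)
    also have "\<dots> = (\<Sum>j\<in>UNIV. (d j * (vv j \<bullet> x)) *\<^sub>R ((1 / d j) *\<^sub>R (M *v vv j)))"
      unfolding Vx diag3_fun matrix_mult_sum[of U] colU by (simp add: scalar_mult_eq_scaleR)
    also have "\<dots> = (\<Sum>j\<in>UNIV. (vv j \<bullet> x) *\<^sub>R (M *v vv j))"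
      using dpos by (intro sum.cong refl) (simp add: less_imp_neq[symmetric])
    also have "\<dots> = M *v (\<Sum>j\<in>UNIV. (vv j \<bullet> x) *\<^sub>R vv j)"
      by (simp add: matrix_vector_mult_scaleR linear_sum[OF matrix_vector_mul_linear])
    also have "\<dots> = M *v x" using expand[of x] by simp
    finally show ?thesis by simp
  qed
  thus "M = (\<chi> i j. (M *v vv j) $ i / d j) ** diag3 (d 0) (d 1) (d 2) ** (\<chi> i. vv i)"
    unfolding U_def[symmetric] V_def[symmetric] by (simp add: matrix_eq)
qed

lemma svd_exists:
  fixes M :: "real^3^3"
  assumes dM: "det M \<noteq> 0"
  shows "\<exists>a1 a2 a3 U V. a1 \<ge> a2 \<and> a2 \<ge> a3 \<and> a3 > 0 \<and> orthogonal_matrix U \<and> orthogonal_matrix V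
           \<and> M = U ** diag3 a1 a2 a3 ** V"
proof -
  have inj: "x = 0" if "M *v x = 0" for x
  proof -
    have "inj ((*v) M)" using dM invertible_det_nz inj_matrix_vector_mult by blast
    moreover have "M *v 0 = 0" by simp
    ultimately show ?thesis using that unfolding inj_def by metis
  qed
  have cont: "continuous_on S (\<lambda>x. norm (M *v x))" for S
    by (intro continuous_on_norm linear_continuous_on matrix_vector_mul_bounded_linear)
  have "\<exists>v\<in>sphere 0 1. \<forall>y\<in>sphere 0 1. norm (M *v y) \<le> norm (M *v v)"
  proof (rule continuous_attains_sup[OF compact_sphere _ cont])
    have "axis 0 1 \<in> sphere (0::real^3) 1" by simp
    thus "sphere (0::real^3) 1 \<noteq> {}" by blast
  qed
  then obtain v1 where v1: "norm v1 = 1" and max1: "\<And>y. norm y = 1 \<Longrightarrow> norm (M *v y) \<le> norm (M *v v1)"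
    by auto
  obtain y where y: "y \<noteq> 0" "orthogonal v1 y"
    using orthogonal_to_vector_exists[of v1] by auto
  have "(1 / norm y) *\<^sub>R y \<in> sphere 0 1 \<inter> {x. v1 \<bullet> x = 0}"
    using y by (simp add: orthogonal_def)
  then have "\<exists>v\<in>sphere 0 1 \<inter> {x. v1 \<bullet> x = 0}. \<forall>y\<in>sphere 0 1 \<inter> {x. v1 \<bullet> x = 0}. norm (M *v y) \<le> norm (M *v v)"
    by (intro continuous_attains_sup[OF compact_Int_closed[OF compact_sphere closed_hyperplane] _ cont]) blast
  then obtain v2 where v2: "norm v2 = 1" "v1 \<bullet> v2 = 0"
    and max2: "\<And>y. norm y = 1 \<Longrightarrow> v1 \<bullet> y = 0 \<Longrightarrow> norm (M *v y) \<le> norm (M *v v2)"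
    by auto
  define v3 where "v3 = cross3 v1 v2"
  have v3: "norm v3 = 1" "v1 \<bullet> v3 = 0" "v2 \<bullet> v3 = 0"
  proof -
    have "(norm v3)^2 = 1" unfolding v3_def norm_cross using v1 v2 by simp
    thus "norm v3 = 1" by (smt (verit) norm_ge_zero power2_eq_1_iff)
    show "v1 \<bullet> v3 = 0" "v2 \<bullet> v3 = 0" unfolding v3_def by (rule dot_cross_self(1), rule dot_cross_self(2))
  qed
  have c: "v2 \<bullet> v1 = 0" "v3 \<bullet> v1 = 0" "v3 \<bullet> v2 = 0" using v2(2) v3(2,3) by (simp_all add: inner_commute)
  have m1: "\<And>x. x \<bullet> 0 = 0 \<Longrightarrow> norm x = 1 \<Longrightarrow> norm (M *v x) \<le> norm (M *v v1)" using max1 by blast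
  have m2: "\<And>x. x \<bullet> v1 = 0 \<Longrightarrow> norm x = 1 \<Longrightarrow> norm (M *v x) \<le> norm (M *v v2)"
    using max2 by (simp add: inner_commute)
  have o12: "(M *v v2) \<bullet> (M *v v1) = 0"
    by (rule var_orth[OF inner_zero_right v1(1) m1 inner_zero_right c(1)])
  have o13: "(M *v v3) \<bullet> (M *v v1) = 0"
    by (rule var_orth[OF inner_zero_right v1(1) m1 inner_zero_right c(2)])
  have o23: "(M *v v3) \<bullet> (M *v v2) = 0"
    by (rule var_orth[OF c(1) v2(1) m2 c(2) c(3)])
  define vv where "vv = (\<lambda>i::3. if i = 0 then v1 else if i = 1 then v2 else v3)"
  define d where "d = (\<lambda>i. norm (M *v vv i))"
  have vv0: "vv 0 = v1" "vv 1 = v2" "vv 2 = v3" unfolding vv_def by simp_all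
  have n1: "norm (vv i) = 1" for i unfolding vv_def using v1 v2 v3 by auto
  have orth: "vv i \<bullet> vv j = 0" if "i \<noteq> j" for i j
  proof -
    have f: "v1 \<bullet> v2 = 0" "v2 \<bullet> v1 = 0" "v1 \<bullet> v3 = 0" "v3 \<bullet> v1 = 0" "v2 \<bullet> v3 = 0" "v3 \<bullet> v2 = 0"
      using v2(2) v3(2,3) by (simp_all add: inner_commute)
    show ?thesis using three_cases[of i] three_cases[of j] that
      by (elim disjE) (simp_all only: vv0 f)
  qed
  have morth: "(M *v vv i) \<bullet> (M *v vv j) = 0" if "i \<noteq> j" for i j
  proof -
    have f: "(M *v v1) \<bullet> (M *v v2) = 0" "(M *v v2) \<bullet> (M *v v1) = 0" "(M *v v1) \<bullet> (M *v v3) = 0"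
      "(M *v v3) \<bullet> (M *v v1) = 0" "(M *v v2) \<bullet> (M *v v3) = 0" "(M *v v3) \<bullet> (M *v v2) = 0"
      using o12 o13 o23 by (simp_all add: inner_commute)
    show ?thesis using three_cases[of i] three_cases[of j] that
      by (elim disjE) (simp_all only: vv0 f)
  qed
  have dpos: "d i > 0" for i
    unfolding d_def using n1[of i] inj[of "vv i"] by fastforce
  have dd: "\<And>i. d i = norm (M *v vv i)" by (simp add: d_def)
  note A = svd_assemble[of vv M d, OF n1 orth morth dd dpos]
  have "d 0 \<ge> d 1" unfolding d_def vv0 using max1 v2 by simp
  moreover have "d 1 \<ge> d 2" unfolding d_def vv0 using max2 v3 by simp
  ultimately show ?thesis
    apply (rule_tac x="d 0" in exI, rule_tac x="d 1" in exI, rule_tac x="d 2" in exI)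
    using A dpos[of 2] by blast
qed

lemma alpha_svd:
  fixes M :: "real^3^3"
  assumes dM: "det M \<noteq> 0"
  shows "\<exists>U V. orthogonal_matrix U \<and> orthogonal_matrix V \<and> alpha1 M \<ge> alpha2 M \<and> alpha2 M \<ge> alpha3 M
     \<and> alpha3 M > 0 \<and> M = U ** diag3 (alpha1 M) (alpha2 M) (alpha3 M) ** V"
proof -
  obtain a1 a2 a3 U V where S: "a1 \<ge> a2" "a2 \<ge> a3" "a3 > 0" "orthogonal_matrix U" "orthogonal_matrix V"
    "M = U ** diag3 a1 a2 a3 ** V"
    using svd_exists[OF dM] by blast
  have "sing_vals M = (a1, a2, a3)"
    unfolding sing_vals_def
  proof (rule the_equality)
    show "case (a1, a2, a3) of (a1, a2, a3) \<Rightarrow> a1 \<ge> a2 \<and> a2 \<ge> a3 \<and> a3 \<ge> 0 \<and>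
      (\<exists>U V. orthogonal_matrix U \<and> orthogonal_matrix V \<and> M = U ** diag3 a1 a2 a3 ** V)"
      using S by auto
  next
    fix x :: "real \<times> real \<times> real"
    assume "case x of (a1, a2, a3) \<Rightarrow> a1 \<ge> a2 \<and> a2 \<ge> a3 \<and> a3 \<ge> 0 \<and>
      (\<exists>U V. orthogonal_matrix U \<and> orthogonal_matrix V \<and> M = U ** diag3 a1 a2 a3 ** V)"
    then obtain b1 b2 b3 U' V' where x: "x = (b1, b2, b3)" and B: "b1 \<ge> b2" "b2 \<ge> b3" "b3 \<ge> 0"
      "orthogonal_matrix U'" "orthogonal_matrix V'" "M = U' ** diag3 b1 b2 b3 ** V'"
      by (cases x) auto
    have "b1 = a1 \<and> b2 = a2 \<and> b3 = a3"
      by (rule svd_unique[OF dM B(4,5,1,2,3,6) S(4,5,1,2) less_imp_le[OF S(3)] S(6)])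
    thus "x = (a1, a2, a3)" using x by simp
  qed
  hence "alpha1 M = a1" "alpha2 M = a2" "alpha3 M = a3" unfolding alpha1_def alpha2_def alpha3_def by simp_all
  thus ?thesis using S by blast
qed

lemma alpha_props:
  fixes M :: "real^3^3"
  assumes dM: "det M \<noteq> 0"
  shows "norm (M *v x) \<le> alpha1 M * norm x" "alpha3 M * norm x \<le> norm (M *v x)"
    "\<exists>x. norm x = 1 \<and> norm (M *v x) = alpha1 M" "\<exists>x. norm x = 1 \<and> norm (M *v x) = alpha3 M"
    "alpha1 M * alpha2 M * alpha3 M = \<bar>det M\<bar>"
    "alpha1 M \<ge> alpha2 M" "alpha2 M \<ge> alpha3 M" "alpha3 M > 0"
proof -
  obtain U V where S: "orthogonal_matrix U" "orthogonal_matrix V" "alpha1 M \<ge> alpha2 M" "alpha2 M \<ge> alpha3 M"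
     "alpha3 M > 0" "M = U ** diag3 (alpha1 M) (alpha2 M) (alpha3 M) ** V"
    using alpha_svd[OF dM] by blast
  note P = svd_props[OF S(1-4) less_imp_le[OF S(5)] S(6)]
  show "norm (M *v x) \<le> alpha1 M * norm x" "alpha3 M * norm x \<le> norm (M *v x)"
    "\<exists>x. norm x = 1 \<and> norm (M *v x) = alpha1 M" "\<exists>x. norm x = 1 \<and> norm (M *v x) = alpha3 M"
    "alpha1 M * alpha2 M * alpha3 M = \<bar>det M\<bar>" using P by simp_all
  show "alpha1 M \<ge> alpha2 M" "alpha2 M \<ge> alpha3 M" "alpha3 M > 0" using S by simp_all
qed

lemma scale_mm3:
  fixes X B Y :: "real^3^3"
  shows "(a *\<^sub>R X) ** B ** (b *\<^sub>R Y) = (a * b) *\<^sub>R (X ** B ** Y)"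
  by (simp add: matrix_matrix_mult_def sum_distrib_left vec_eq_iff mult_ac)

lemma cont_mm3:
  fixes B :: "real^3^3"
  shows "continuous_on S (\<lambda>p::(real^3^3) \<times> (real^3^3). norm (fst p ** B ** snd p))"
  unfolding matrix_matrix_mult_def
  by (intro continuous_intros)

lemma feng:
  fixes B :: "'w \<Rightarrow> real^3^3"
  assumes nz: "\<And>(X::real^3^3) (Y::real^3^3). X \<noteq> 0 \<Longrightarrow> Y \<noteq> 0 \<Longrightarrow> \<exists>k. X ** B k ** Y \<noteq> 0"
  shows "\<exists>\<Gamma> c. finite \<Gamma> \<and> \<Gamma> \<noteq> {} \<and> c > 0 \<and> (\<forall>(X::real^3^3) (Y::real^3^3). \<exists>k\<in>\<Gamma>. norm (X ** B k ** Y) \<ge> c * norm X * norm Y)"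
proof -
  define K where "K = sphere (0::real^3^3) 1 \<times> sphere (0::real^3^3) 1"
  define Op where "Op = (\<lambda>(k, n::nat). {p::(real^3^3) \<times> (real^3^3). 1 / real (Suc n) < norm (fst p ** B k ** snd p)})"
  have cK: "compact K" unfolding K_def by (intro compact_Times compact_sphere)
  have oO: "open (Op kn)" for kn
  proof -
    obtain k n where kn: "kn = (k, n)" by fastforce
    show ?thesis unfolding Op_def kn
      by (simp, intro open_Collect_less continuous_on_const cont_mm3)
  qed
  have cover: "K \<subseteq> (\<Union>kn\<in>UNIV. Op kn)"
  proof
    fix p assume "p \<in> K"
    then have "norm (fst p) = 1" "norm (snd p) = 1" unfolding K_def by (simp_all add: mem_Times_iff)
    then have f1: "fst p \<noteq> 0" and f2: "snd p \<noteq> 0" by auto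
    obtain k where "fst p ** B k ** snd p \<noteq> 0" using nz[OF f1 f2] by (elim exE)
    then have pos: "norm (fst p ** B k ** snd p) > 0" by simp
    obtain n where "inverse (real (Suc n)) < norm (fst p ** B k ** snd p)"
      using reals_Archimedean[OF pos] by (elim exE)
    then have "p \<in> Op (k, n)" unfolding Op_def by (simp add: inverse_eq_divide)
    then show "p \<in> (\<Union>kn\<in>UNIV. Op kn)" by (rule UN_I[OF UNIV_I])
  qed
  obtain D where D0: "D \<subseteq> UNIV" and D: "finite D" "K \<subseteq> (\<Union>kn\<in>D. Op kn)"
    by (rule compactE_image[OF cK oO cover])
  obtain k0 :: 'w where True by blast
  define \<Gamma> where "\<Gamma> = insert k0 (fst ` D)"
  define N where "N = (\<Sum>kn\<in>D. snd kn)"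
  define c where "c = 1 / real (Suc N)"
  have "finite \<Gamma>" "\<Gamma> \<noteq> {}" "c > 0" unfolding \<Gamma>_def c_def using D(1) by simp_all
  moreover have "\<exists>k\<in>\<Gamma>. norm (X ** B k ** Y) \<ge> c * norm X * norm Y" for X Y :: "real^3^3"
  proof (cases "X = 0 \<or> Y = 0")
    case True
    then show ?thesis unfolding \<Gamma>_def by auto
  next
    case False
    define p where "p = ((1 / norm X) *\<^sub>R X, (1 / norm Y) *\<^sub>R Y)"
    have "p \<in> K" unfolding p_def K_def using False by simp
    then obtain kn where "kn \<in> D" "p \<in> Op kn" using D(2) by blast
    then obtain k n where kn: "(k, n) \<in> D" "p \<in> Op (k, n)" by (cases kn) simp
    have "n \<le> N" unfolding N_def using member_le_sum[of "(k,n)" D snd] D(1) kn(1) by simp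
    hence "c \<le> 1 / real (Suc n)" unfolding c_def by (intro divide_left_mono) auto
    also have "\<dots> < norm (((1 / norm X) *\<^sub>R X) ** B k ** ((1 / norm Y) *\<^sub>R Y))"
      using kn(2) unfolding Op_def p_def by simp
    also have "\<dots> = norm (X ** B k ** Y) / (norm X * norm Y)"
      unfolding scale_mm3 norm_scaleR by simp
    finally have lt: "c < norm (X ** B k ** Y) / (norm X * norm Y)" .
    have "norm X * norm Y > 0" using False by simp
    hence "c * (norm X * norm Y) < norm (X ** B k ** Y)" using lt by (simp add: pos_less_divide_eq)
    moreover have "k \<in> \<Gamma>" unfolding \<Gamma>_def using kn(1) by (simp add: image_iff) (metis fst_conv)
    ultimately show ?thesis by (intro bexI[of _ k]) (simp_all add: mult.assoc)
  qed
  ultimately show ?thesis by blast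
qed

lemma inv_props:
  fixes M :: "real^3^3"
  assumes "det M \<noteq> 0"
  shows "M ** matrix_inv M = mat 1" "matrix_inv M ** M = mat 1"
proof -
  have "\<exists>A'. M ** A' = mat 1 \<and> A' ** M = mat 1"
    using assms invertible_det_nz invertible_def by blast
  hence "M ** matrix_inv M = mat 1 \<and> matrix_inv M ** M = mat 1"
    unfolding matrix_inv_def by (rule someI_ex)
  thus "M ** matrix_inv M = mat 1" "matrix_inv M ** M = mat 1" by simp_all
qed

lemma inv_unique:
  fixes M N :: "real^3^3"
  assumes "det M \<noteq> 0" "M ** N = mat 1"
  shows "matrix_inv M = N"
proof -
  have "N = (matrix_inv M ** M) ** N" using inv_props[OF assms(1)] by simp
  also have "\<dots> = matrix_inv M" using assms(2) by (simp add: matrix_mul_assoc[symmetric])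
  finally show ?thesis by simp
qed

lemma inv_mult:
  fixes P Q :: "real^3^3"
  assumes "det P \<noteq> 0" "det Q \<noteq> 0"
  shows "matrix_inv (P ** Q) = matrix_inv Q ** matrix_inv P"
proof (rule inv_unique)
  show "det (P ** Q) \<noteq> 0" using assms by (simp add: det_mul)
  have "P ** Q ** (matrix_inv Q ** matrix_inv P) = P ** (Q ** matrix_inv Q) ** matrix_inv P"
    by (simp add: matrix_mul_assoc)
  also have "\<dots> = mat 1" using inv_props[OF assms(1)] inv_props[OF assms(2)] by simp
  finally show "P ** Q ** (matrix_inv Q ** matrix_inv P) = mat 1" .
qed

lemma word_nil: "word_mat A [] = mat 1"
  by (simp add: word_mat_def)

lemma word_cons: "word_mat A (i # u) = A i ** word_mat A u"
  by (simp add: word_mat_def)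

lemma word_append: "word_mat A (u @ w) = word_mat A u ** word_mat A w"
  by (induction u) (simp_all add: word_nil word_cons matrix_mul_assoc)

lemma word_det:
  assumes "\<forall>i. det (A i) = (1::real)"
  shows "det (word_mat A u) = 1"
  by (induction u) (simp_all add: word_nil word_cons det_mul assms)

lemma mat_zero_ex:
  fixes X :: "real^3^3"
  assumes "X \<noteq> 0"
  shows "\<exists>z. X *v z \<noteq> 0"
proof (rule ccontr)
  assume "\<not> ?thesis"
  hence "\<forall>z. X *v z = (0::real^3^3) *v z" by simp
  hence "X = 0" by (simp add: matrix_eq)
  with assms show False by simp
qed

lemma inj_image_subspace_eq:
  fixes f :: "real^3 \<Rightarrow> real^3"
  assumes "linear f" "inj f" "subspace V" "f ` V \<subseteq> V"
  shows "f ` V = V"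
proof (rule subspace_dim_equal)
  show "subspace (f ` V)" using assms by (simp add: linear_subspace_image)
  show "subspace V" by fact
  show "f ` V \<subseteq> V" by fact
  have "dim (f ` V) = dim V"
    by (rule dim_image_eq[OF assms(1)]) (use assms(2) in \<open>auto simp: inj_on_def inj_def\<close>)
  thus "dim V \<le> dim (f ` V)" by simp
qed

lemma irred_nz:
  fixes A :: "'i \<Rightarrow> real^3^3"
  assumes det1: "\<forall>i. det (A i) = 1" and irr: "irreducible_family A"
  shows "\<And>(X::real^3^3) (Y::real^3^3). X \<noteq> 0 \<Longrightarrow> Y \<noteq> 0 \<Longrightarrow> \<exists>k. X ** matrix_inv (word_mat A k) ** Y \<noteq> 0"
proof (rule ccontr)
  fix X Y :: "real^3^3"
  assume X: "X \<noteq> 0" and Y: "Y \<noteq> 0" and "\<not> (\<exists>k. X ** matrix_inv (word_mat A k) ** Y \<noteq> 0)"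
  hence zero: "\<And>k. X ** matrix_inv (word_mat A k) ** Y = 0" by blast
  define B where "B = (\<lambda>k. matrix_inv (word_mat A k))"
  define V where "V = {z. \<forall>k. X *v (B k *v z) = 0}"
  have sV: "subspace V"
    unfolding subspace_def V_def
    by (simp add: matrix_vector_right_distrib matrix_vector_mult_scaleR)
  obtain z where z: "Y *v z \<noteq> 0" using mat_zero_ex[OF Y] by blast
  have "Y *v z \<in> V"
    unfolding V_def B_def using zero by (simp add: matrix_vector_mul_assoc)
  hence V0: "V \<noteq> {0}" using z by blast
  obtain z' where z': "X *v z' \<noteq> 0" using mat_zero_ex[OF X] by blast
  have "B [] = mat 1" unfolding B_def word_nil by (rule inv_unique) simp_all
  hence "X *v (B [] *v z') \<noteq> 0" using z' by simp
  hence "z' \<notin> V" unfolding V_def by blast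
  hence VU: "V \<noteq> UNIV" by blast
  have dA: "det (A i) \<noteq> 0" for i using det1 by simp
  have dW: "det (word_mat A k) \<noteq> 0" for k using word_det[OF det1] by simp
  have inv_in: "matrix_inv (A i) *v v \<in> V" if "v \<in> V" for i v
  proof -
    have "B k ** matrix_inv (A i) = B (i # k)" for k
      unfolding B_def word_cons using inv_mult[OF dA dW] by simp
    hence "X *v (B k *v (matrix_inv (A i) *v v)) = X *v (B (i # k) *v v)" for k
      by (simp add: matrix_vector_mul_assoc)
    thus ?thesis using that unfolding V_def by simp
  qed
  have "\<forall>i. \<forall>v\<in>V. A i *v v \<in> V"
  proof (intro allI ballI)
    fix i v assume v: "v \<in> V"
    have "inj ((*v) (matrix_inv (A i)))"
      using inj_matrix_vector_mult invertible_def inv_props[OF dA] by blast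
    moreover have "(*v) (matrix_inv (A i)) ` V \<subseteq> V" using inv_in by blast
    ultimately have "(*v) (matrix_inv (A i)) ` V = V"
      using inj_image_subspace_eq[OF matrix_vector_mul_linear _ sV] by blast
    then obtain w where w: "w \<in> V" "v = matrix_inv (A i) *v w" using v by blast
    have "A i *v v = w" using w(2) inv_props[OF dA] by (simp add: matrix_vector_mul_assoc)
    thus "A i *v v \<in> V" using w(1) by simp
  qed
  thus False using irr sV V0 VU unfolding irreducible_family_def by blast
qed

lemma fro_upper:
  fixes N :: "real^3^3"
  assumes "\<And>x. norm (N *v x) \<le> b * norm x"
  shows "norm N \<le> 9 * b"
proof -
  have e: "\<bar>N $ i $ j\<bar> \<le> b" for i j
  proof -
    have "N $ i $ j = (N *v axis j 1) $ i"
      by (simp add: matrix_vector_mult_def axis_def if_distrib cong: if_cong)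
    hence "\<bar>N $ i $ j\<bar> \<le> norm (N *v axis j 1)" by (simp add: component_le_norm_cart)
    also have "\<dots> \<le> b" using assms[of "axis j 1"] by simp
    finally show ?thesis .
  qed
  have r: "norm (N $ i) \<le> 3 * b" for i
  proof -
    have "norm (N $ i) \<le> (\<Sum>j\<in>UNIV. \<bar>N $ i $ j\<bar>)" by (rule norm_le_l1_cart)
    also have "\<dots> \<le> (\<Sum>j\<in>(UNIV::3 set). b)" by (intro sum_mono e)
    finally show ?thesis by simp
  qed
  have "norm N \<le> (\<Sum>i\<in>UNIV. norm (N $ i))" unfolding norm_vec_def by (rule L2_set_le_sum) simp
  also have "\<dots> \<le> (\<Sum>i\<in>(UNIV::3 set). 3 * b)" by (intro sum_mono r)
  finally show ?thesis by simp
qed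

lemma fro_lower:
  fixes N :: "real^3^3"
  shows "norm (N *v x) \<le> norm N * norm x"
proof -
  have c: "\<bar>(N *v x) $ i\<bar> \<le> norm (N $ i) * norm x" for i
  proof -
    have "(N *v x) $ i = N $ i \<bullet> x" by (simp add: matrix_vector_mult_def inner_vec_def)
    thus ?thesis using Cauchy_Schwarz_ineq2 by simp
  qed
  have "norm (N *v x) = L2_set (\<lambda>i. \<bar>(N *v x) $ i\<bar>) UNIV" unfolding norm_vec_def by simp
  also have "\<dots> \<le> L2_set (\<lambda>i. norm (N $ i) * norm x) UNIV"
    by (rule L2_set_mono) (use c in auto)
  also have "\<dots> = norm N * norm x"
    unfolding norm_vec_def by (simp add: L2_set_right_distrib mult.commute)
  finally show ?thesis .
qed

definition bet :: "real^3^3 \<Rightarrow> real" where "bet M = 1 / alpha3 M"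

lemma bet_props:
  fixes M :: "real^3^3"
  assumes dM: "det M \<noteq> 0"
  shows "bet M \<le> norm (matrix_inv M)" "norm (matrix_inv M) \<le> 9 * bet M" "bet M > 0"
proof -
  note P = alpha_props[OF dM]
  note I = inv_props[OF dM]
  have up: "norm (matrix_inv M *v y) \<le> bet M * norm y" for y
  proof -
    have "alpha3 M * norm (matrix_inv M *v y) \<le> norm (M *v (matrix_inv M *v y))" by (rule P(2))
    also have "M *v (matrix_inv M *v y) = y" using I by (simp add: matrix_vector_mul_assoc)
    finally show ?thesis using P(8) unfolding bet_def by (simp add: field_simps)
  qed
  thus "norm (matrix_inv M) \<le> 9 * bet M" by (rule fro_upper)
  show "bet M > 0" using P(8) unfolding bet_def by simp
  obtain x where x: "norm x = 1" "norm (M *v x) = alpha3 M" using P(4) by blast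
  have "matrix_inv M *v (M *v x) = x" using I by (simp add: matrix_vector_mul_assoc)
  hence "1 \<le> norm (matrix_inv M) * alpha3 M" using fro_lower[of "matrix_inv M" "M *v x"] x by simp
  thus "bet M \<le> norm (matrix_inv M)" using P(8) unfolding bet_def by (simp add: field_simps)
qed

lemma alpha1_mult:
  fixes P Q :: "real^3^3"
  assumes "det P \<noteq> 0" "det Q \<noteq> 0"
  shows "alpha1 (P ** Q) \<le> alpha1 P * alpha1 Q"
proof -
  have d: "det (P ** Q) \<noteq> 0" using assms by (simp add: det_mul)
  obtain x where x: "norm x = 1" "norm ((P ** Q) *v x) = alpha1 (P ** Q)" using alpha_props(3)[OF d] by blast
  have "norm ((P ** Q) *v x) = norm (P *v (Q *v x))" by (simp add: matrix_vector_mul_assoc)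
  also have "\<dots> \<le> alpha1 P * norm (Q *v x)" by (rule alpha_props(1)[OF assms(1)])
  also have "\<dots> \<le> alpha1 P * (alpha1 Q * norm x)"
    using alpha_props(1)[OF assms(2)] alpha_props(6,7,8)[OF assms(1)] by (intro mult_left_mono) auto
  finally show ?thesis using x by simp
qed

definition pp :: "real \<Rightarrow> real" where
  "pp s = (if s \<le> 1 then s else if s \<le> 2 then 2 - s else 0)"
definition qq :: "real \<Rightarrow> real" where
  "qq s = (if s \<le> 1 then 2 * s else if s \<le> 2 then s + 1 else 3 * s)"

lemma pp_qq_nonneg: "s \<ge> 0 \<Longrightarrow> pp s \<ge> 0 \<and> qq s \<ge> 0"
  unfolding pp_def qq_def by auto

lemma phi_form:
  fixes M :: "real^3^3"
  assumes dM: "det M = 1"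
  shows "phi s M = bet M powr pp s * alpha1 M powr (- qq s)"
proof -
  have d: "det M \<noteq> 0" using dM by simp
  note P = alpha_props[OF d]
  define a where "a = alpha1 M"
  define a2 where "a2 = alpha2 M"
  define a3 where "a3 = alpha3 M"
  have pos: "a3 > 0" "a2 > 0" "a > 0" using P(6,7,8) unfolding a_def a2_def a3_def by linarith+
  have prod: "a * a2 * a3 = 1" using P(5) dM unfolding a_def a2_def a3_def by simp
  have l2: "ln a2 = - ln a - ln a3"
  proof -
    have "ln (a * a2 * a3) = 0" using prod by simp
    thus ?thesis using pos by (simp add: ln_mult)
  qed
  have bb: "bet M = 1 / a3" unfolding bet_def a3_def by simp
  have lb: "ln (bet M) = - ln a3" using pos unfolding bb by (simp add: ln_div)
  have bpos: "bet M > 0" using pos bb by simp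
  have ex: "x powr y = exp (y * ln x)" if "x > 0" for x y :: real using that by (simp add: powr_def)
  consider "s \<le> 1" | "\<not> s \<le> 1" "s \<le> 2" | "\<not> s \<le> 1" "\<not> s \<le> 2" by blast
  then show ?thesis
  proof cases
    case 1
    have "phi s M = (a2 / a) powr s" using 1 unfolding phi_def a_def a2_def by simp
    also have "\<dots> = exp (s * (ln a2 - ln a))" using pos by (simp add: ex ln_div)
    also have "\<dots> = exp (s * ln (bet M) + (- (2 * s)) * ln a)" unfolding l2 lb by (simp add: algebra_simps)
    also have "\<dots> = bet M powr pp s * alpha1 M powr (- qq s)"
      using 1 pos bpos unfolding pp_def qq_def a_def[symmetric] by (simp add: ex mult_exp_exp algebra_simps)
    finally show ?thesis .
  next
    case 2
    have "phi s M = (a2 / a) * (a3 / a) powr (s - 1)" using 2 unfolding phi_def a_def a2_def a3_def by simp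
    also have "\<dots> = exp (ln a2 - ln a) * exp ((s - 1) * (ln a3 - ln a))" using pos by (simp add: ex ln_div exp_diff)
    also have "\<dots> = exp ((2 - s) * ln (bet M) + (- (s + 1)) * ln a)"
      unfolding l2 lb exp_add[symmetric] by (simp add: algebra_simps)
    also have "\<dots> = bet M powr pp s * alpha1 M powr (- qq s)"
      using 2 pos bpos unfolding pp_def qq_def a_def[symmetric] by (simp add: ex mult_exp_exp algebra_simps)
    finally show ?thesis .
  next
    case 3
    have "phi s M = (a2 * a3 / a^2) powr s" using 3 unfolding phi_def a_def a2_def a3_def by simp
    also have "\<dots> = exp (s * (ln a2 + ln a3 - 2 * ln a))" using pos by (simp add: ex ln_div ln_mult ln_realpow)
    also have "\<dots> = exp ((- (3 * s)) * ln a)"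
      unfolding l2 by (simp add: algebra_simps)
    also have "\<dots> = bet M powr pp s * alpha1 M powr (- qq s)"
      using 3 pos bpos unfolding pp_def qq_def a_def[symmetric] by (simp add: ex)
    finally show ?thesis .
  qed
qed

lemma key_ineq:
  fixes b' a' b1 b2 a1 a2 c1 C p q :: real
  assumes "b' \<ge> c1 * b1 * b2" "a' \<le> C * a1 * a2" "b1 > 0" "b2 > 0" "a1 > 0" "a2 > 0" "c1 > 0" "C > 0"
    "a' > 0" "p \<ge> 0" "q \<ge> 0"
  shows "b' powr p * a' powr (- q) \<ge>
     (c1 powr p * C powr (- q)) * (b1 powr p * a1 powr (- q)) * (b2 powr p * a2 powr (- q))"
proof -
  have "(c1 * b1 * b2) powr p \<le> b' powr p"
    using assms by (intro powr_mono2) auto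
  hence 1: "c1 powr p * b1 powr p * b2 powr p \<le> b' powr p"
    using assms by (simp add: powr_mult)
  have "(C * a1 * a2) powr (- q) \<le> a' powr (- q)"
    using assms by (intro powr_mono2') auto
  hence 2: "C powr (- q) * a1 powr (- q) * a2 powr (- q) \<le> a' powr (- q)"
    using assms by (simp add: powr_mult)
  have "(c1 powr p * b1 powr p * b2 powr p) * (C powr (- q) * a1 powr (- q) * a2 powr (- q))
        \<le> b' powr p * a' powr (- q)"
    by (rule mult_mono[OF 1 2]) auto
  thus ?thesis by (simp add: ac_simps)
qed

theorem corollary2p3:
  fixes A :: "'i::countable \<Rightarrow> real^3^3" and s :: real
  assumes "\<forall>i. det (A i) = 1"
    and "irreducible_family A"
    and "s \<ge> 0"
  shows "quasimultiplicative A (phi s)"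
proof -
  define B where "B = (\<lambda>k. matrix_inv (word_mat A k))"
  have nz: "\<And>(X::real^3^3) (Y::real^3^3). X \<noteq> 0 \<Longrightarrow> Y \<noteq> 0 \<Longrightarrow> \<exists>k. X ** B k ** Y \<noteq> 0"
    unfolding B_def by (rule irred_nz[OF assms(1,2)])
  obtain \<Gamma> c where G: "finite \<Gamma>" "\<Gamma> \<noteq> {}" "c > 0"
    and Gc: "\<And>(X::real^3^3) (Y::real^3^3). \<exists>k\<in>\<Gamma>. norm (X ** B k ** Y) \<ge> c * norm X * norm Y"
    using feng[OF nz] by blast
  have dW: "det (word_mat A u) = 1" for u using word_det[OF assms(1)] .
  have dW': "det (word_mat A u) \<noteq> 0" for u using dW by simp
  have a1pos: "alpha1 (word_mat A u) > 0" for u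
    using alpha_props(6,7,8)[OF dW'[of u]] by linarith
  define C where "C = 1 + (\<Sum>k\<in>\<Gamma>. alpha1 (word_mat A k))"
  have Cb: "alpha1 (word_mat A k) \<le> C" if "k \<in> \<Gamma>" for k
  proof -
    have "alpha1 (word_mat A k) \<le> (\<Sum>k\<in>\<Gamma>. alpha1 (word_mat A k))"
      using member_le_sum[of k \<Gamma> "\<lambda>k. alpha1 (word_mat A k)"] G(1) that a1pos less_imp_le by blast
    thus ?thesis unfolding C_def by simp
  qed
  have Cpos: "C > 0" using Cb a1pos G(2) by (meson all_not_in_conv less_le_trans)
  define c' where "c' = (c / 9) powr pp s * C powr (- qq s)"
  have c'pos: "c' > 0" unfolding c'_def using G(3) Cpos by simp
  have main: "\<exists>k\<in>\<Gamma>. phi s (word_mat A (u @ k @ w)) \<ge> c' * phi s (word_mat A u) * phi s (word_mat A w)" for u w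
  proof -
    define P where "P = word_mat A u"
    define R where "R = word_mat A w"
    obtain k where k: "k \<in> \<Gamma>" and kc: "norm (matrix_inv R ** B k ** matrix_inv P) \<ge> c * norm (matrix_inv R) * norm (matrix_inv P)"
      using Gc by blast
    define Q where "Q = word_mat A k"
    define T where "T = word_mat A (u @ k @ w)"
    have dP: "det P \<noteq> 0" "det P = 1" unfolding P_def using dW by simp_all
    have dQ: "det Q \<noteq> 0" "det Q = 1" unfolding Q_def using dW by simp_all
    have dR: "det R \<noteq> 0" "det R = 1" unfolding R_def using dW by simp_all
    have dT: "det T \<noteq> 0" "det T = 1" unfolding T_def using dW by simp_all
    have T: "T = P ** Q ** R" unfolding T_def P_def Q_def R_def by (simp add: word_append matrix_mul_assoc)
    have dPQ: "det (P ** Q) \<noteq> 0" using dP dQ by (simp add: det_mul)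
    have iT: "matrix_inv T = matrix_inv R ** B k ** matrix_inv P"
      unfolding T B_def Q_def[symmetric] inv_mult[OF dPQ dR(1)] inv_mult[OF dP(1) dQ(1)]
      by (simp add: matrix_mul_assoc)
    have b1: "bet T \<ge> (c / 9) * bet P * bet R"
    proof -
      have "(c / 9) * bet P * bet R \<le> (c / 9) * norm (matrix_inv R) * norm (matrix_inv P)"
        using bet_props[OF dP(1)] bet_props[OF dR(1)] G(3)
        by (simp add: mult.assoc mult.left_commute[of "bet P"] mult_left_mono mult_mono)
      also have "\<dots> \<le> norm (matrix_inv T) / 9" using kc iT by simp
      also have "\<dots> \<le> bet T" using bet_props(2)[OF dT(1)] by simp
      finally show ?thesis .
    qed
    have a1: "alpha1 T \<le> C * alpha1 P * alpha1 R"
    proof -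
      have "alpha1 T \<le> alpha1 (P ** Q) * alpha1 R" unfolding T by (rule alpha1_mult[OF dPQ dR(1)])
      also have "\<dots> \<le> (alpha1 P * alpha1 Q) * alpha1 R"
        using alpha1_mult[OF dP(1) dQ(1)] a1pos[of w] unfolding R_def by (intro mult_right_mono) auto
      also have "\<dots> \<le> (alpha1 P * C) * alpha1 R"
        using Cb[OF k] a1pos[of u] a1pos[of w] unfolding P_def R_def Q_def
        by (intro mult_right_mono mult_left_mono) auto
      finally show ?thesis by (simp add: ac_simps)
    qed
    have pq: "pp s \<ge> 0" "qq s \<ge> 0" using pp_qq_nonneg[OF assms(3)] by auto
    have "phi s T \<ge> c' * phi s P * phi s R"
      unfolding phi_form[OF dT(2)] phi_form[OF dP(2)] phi_form[OF dR(2)] c'_def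
      by (rule key_ineq[OF b1 a1 bet_props(3)[OF dP(1)] bet_props(3)[OF dR(1)]
            a1pos[of u, folded P_def] a1pos[of w, folded R_def] _ Cpos a1pos[of "u @ k @ w", folded T_def] pq])
        (use G(3) in simp)
    thus ?thesis using k unfolding T_def P_def R_def by blast
  qed
  show ?thesis unfolding quasimultiplicative_def using G(1) c'pos main by blast
qed


end
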